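(* For every $\alpha>0$ there exist $c<\infty$ and $u>0$ such that for all positive integers $i,j,k$, \[\sum_{\pi\in\mathrm{seq}_k(i,j,0)}\prod_{l=1}^k e^{-\alpha K_l}\le c\,e^{-uk^2}.\]
   Context: A legal sequence of length $k$ is a sequence of triples $\pi=[(i_0,j_0,0),(i_1,j_1,R_1),\dots,(i_k,j_k,R_k)]$ with $i_l,j_l\in\{1,2,3,\dots\}$, $R_l\in\{0,1\}$, such that for $0\le l\le k-1$: if $R_{l+1}=0$ then $i_{l+1}\ge i_l+1$ and $j_l\le j_{l+1}\le j_l+1$; if $R_{l+1}=1$ then $i_l\le i_{l+1}\le i_l+1$ and $j_{l+1}\ge j_l+1$. $\mathrm{seq}_k(i,j,0)$ is the set of legal sequences of length $k$ with $(i_k,j_k,R_k)=(i,j,0)$. For $1\le l\le k$, $K_l=i_{l-1}$ if $R_l=0$ and $K_l=j_{l-1}$ if $R_l=1$. *)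

theory Defs
  imports Complex_Main
begin

text \<open>A sequence is a list of triples (i_l, j_l, R_l), l = 0..k, with R_l in {0,1}.\<close>

definition seqI :: "(nat \<times> nat \<times> nat) list \<Rightarrow> nat \<Rightarrow> nat" where
  "seqI \<pi> l = fst (\<pi> ! l)"

definition seqJ :: "(nat \<times> nat \<times> nat) list \<Rightarrow> nat \<Rightarrow> nat" where
  "seqJ \<pi> l = fst (snd (\<pi> ! l))"

definition seqR :: "(nat \<times> nat \<times> nat) list \<Rightarrow> nat \<Rightarrow> nat" where
  "seqR \<pi> l = snd (snd (\<pi> ! l))"

definition legal_seq :: "nat \<Rightarrow> (nat \<times> nat \<times> nat) list \<Rightarrow> bool" where
  "legal_seq k \<pi> \<longleftrightarrow>
     length \<pi> = k + 1 \<and>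
     (\<forall>l\<le>k. 1 \<le> seqI \<pi> l \<and> 1 \<le> seqJ \<pi> l \<and> seqR \<pi> l \<in> {0, 1}) \<and>
     seqR \<pi> 0 = 0 \<and>
     (\<forall>l<k.
        (seqR \<pi> (l + 1) = 0 \<longrightarrow>
           seqI \<pi> (l + 1) \<ge> seqI \<pi> l + 1 \<and>
           seqJ \<pi> l \<le> seqJ \<pi> (l + 1) \<and> seqJ \<pi> (l + 1) \<le> seqJ \<pi> l + 1) \<and>
        (seqR \<pi> (l + 1) = 1 \<longrightarrow>
           seqI \<pi> l \<le> seqI \<pi> (l + 1) \<and> seqI \<pi> (l + 1) \<le> seqI \<pi> l + 1 \<and>
           seqJ \<pi> (l + 1) \<ge> seqJ \<pi> l + 1))"

definition seq0 :: "nat \<Rightarrow> nat \<Rightarrow> nat \<Rightarrow> (nat \<times> nat \<times> nat) list set" where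
  "seq0 k i j = {\<pi>. legal_seq k \<pi> \<and> \<pi> ! k = (i, j, 0)}"

definition seqK :: "(nat \<times> nat \<times> nat) list \<Rightarrow> nat \<Rightarrow> nat" where
  "seqK \<pi> l = (if seqR \<pi> l = 0 then seqI \<pi> (l - 1) else seqJ \<pi> (l - 1))"

end

theory Submission imports Defs begin

lemma legal_stepD:
  assumes "legal_seq k \<pi>" "n < k"
  shows "(seqR \<pi> (Suc n) = 0 \<and> seqI \<pi> n + 1 \<le> seqI \<pi> (Suc n) \<and> seqJ \<pi> n \<le> seqJ \<pi> (Suc n) \<and> seqJ \<pi> (Suc n) \<le> seqJ \<pi> n + 1)
       \<or> (seqR \<pi> (Suc n) = 1 \<and> seqI \<pi> n \<le> seqI \<pi> (Suc n) \<and> seqI \<pi> (Suc n) \<le> seqI \<pi> n + 1 \<and> seqJ \<pi> n + 1 \<le> seqJ \<pi> (Suc n))"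
proof -
  have R: "seqR \<pi> (Suc n) \<in> {0,1}" using assms unfolding legal_seq_def by auto
  have S: "(seqR \<pi> (n + 1) = 0 \<longrightarrow>
           seqI \<pi> (n + 1) \<ge> seqI \<pi> n + 1 \<and>
           seqJ \<pi> n \<le> seqJ \<pi> (n + 1) \<and> seqJ \<pi> (n + 1) \<le> seqJ \<pi> n + 1) \<and>
        (seqR \<pi> (n + 1) = 1 \<longrightarrow>
           seqI \<pi> n \<le> seqI \<pi> (n + 1) \<and> seqI \<pi> (n + 1) \<le> seqI \<pi> n + 1 \<and>
           seqJ \<pi> (n + 1) \<ge> seqJ \<pi> n + 1)" using assms unfolding legal_seq_def by blast
  show ?thesis using R S by auto
qed

lemma legal_mono:
  assumes "legal_seq k \<pi>" "l \<le> m" "m \<le> k"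
  shows "seqI \<pi> l \<le> seqI \<pi> m \<and> seqJ \<pi> l \<le> seqJ \<pi> m"
proof -
  have "m \<le> k \<longrightarrow> seqI \<pi> l \<le> seqI \<pi> m \<and> seqJ \<pi> l \<le> seqJ \<pi> m"
    using assms(2)
  proof (induction m rule: dec_induct)
    case base then show ?case by simp
  next
    case (step n)
    show ?case
    proof
      assume "Suc n \<le> k"
      then have "n < k" by simp
      have IH: "seqI \<pi> l \<le> seqI \<pi> n \<and> seqJ \<pi> l \<le> seqJ \<pi> n" using step.IH \<open>n < k\<close> by simp
      from legal_stepD[OF assms(1) \<open>n < k\<close>] IH show "seqI \<pi> l \<le> seqI \<pi> (Suc n) \<and> seqJ \<pi> l \<le> seqJ \<pi> (Suc n)"
        by auto
    qed
  qed
  then show ?thesis using assms by simp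
qed

lemma Ksum_bound:
  assumes "legal_seq k \<pi>"
  shows "k^2 \<le> 4 * (\<Sum>l=1..k. seqK \<pi> l)"
proof -
  have "l \<le> k \<longrightarrow> (\<exists>a b. a + b = l \<and> a + 1 \<le> seqI \<pi> l \<and> b + 1 \<le> seqJ \<pi> l \<and>
          a*(a+1) + b*(b+1) \<le> 2 * (\<Sum>m=1..l. seqK \<pi> m))" for l
  proof (induction l)
    case 0
    then show ?case using assms unfolding legal_seq_def by auto
  next
    case (Suc n)
    show ?case
    proof
      assume "Suc n \<le> k"
      then have nk: "n < k" by simp
      then obtain a b where ab: "a + b = n" "a + 1 \<le> seqI \<pi> n" "b + 1 \<le> seqJ \<pi> n"
        "a*(a+1) + b*(b+1) \<le> 2 * (\<Sum>m=1..n. seqK \<pi> m)" using Suc by auto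
      have sm: "(\<Sum>m=1..Suc n. seqK \<pi> m) = (\<Sum>m=1..n. seqK \<pi> m) + seqK \<pi> (Suc n)"
        by simp
      from legal_stepD[OF assms nk] show "\<exists>a b. a + b = Suc n \<and> a + 1 \<le> seqI \<pi> (Suc n) \<and> b + 1 \<le> seqJ \<pi> (Suc n) \<and>
          a*(a+1) + b*(b+1) \<le> 2 * (\<Sum>m=1..Suc n. seqK \<pi> m)"
      proof
        assume h: "seqR \<pi> (Suc n) = 0 \<and> seqI \<pi> n + 1 \<le> seqI \<pi> (Suc n) \<and> seqJ \<pi> n \<le> seqJ \<pi> (Suc n) \<and> seqJ \<pi> (Suc n) \<le> seqJ \<pi> n + 1"
        then have K: "seqK \<pi> (Suc n) = seqI \<pi> n" unfolding seqK_def by simp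
        have "(a+1)*(a+2) + b*(b+1) = a*(a+1) + b*(b+1) + 2*(a+1)" by (simp add: algebra_simps)
        also have "\<dots> \<le> 2 * (\<Sum>m=1..Suc n. seqK \<pi> m)" using ab(2,4) sm K by simp
        finally show ?thesis using ab h by (intro exI[of _ "a+1"] exI[of _ b]) auto
      next
        assume h: "seqR \<pi> (Suc n) = 1 \<and> seqI \<pi> n \<le> seqI \<pi> (Suc n) \<and> seqI \<pi> (Suc n) \<le> seqI \<pi> n + 1 \<and> seqJ \<pi> n + 1 \<le> seqJ \<pi> (Suc n)"
        then have K: "seqK \<pi> (Suc n) = seqJ \<pi> n" unfolding seqK_def by simp
        have "a*(a+1) + (b+1)*(b+2) = a*(a+1) + b*(b+1) + 2*(b+1)" by (simp add: algebra_simps)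
        also have "\<dots> \<le> 2 * (\<Sum>m=1..Suc n. seqK \<pi> m)" using ab(3,4) sm K by simp
        finally show ?thesis using ab h by (intro exI[of _ a] exI[of _ "b+1"]) auto
      qed
    qed
  qed
  then obtain a b where ab: "a + b = k" "a*(a+1) + b*(b+1) \<le> 2 * (\<Sum>m=1..k. seqK \<pi> m)" by blast
  have "k^2 \<le> 2*(a*(a+1) + b*(b+1))"
  proof -
    have "0 \<le> (int a - int b)^2" by simp
    then have "2*int a*int b \<le> int a^2 + int b^2" by (simp add: power2_diff)
    then have "2*a*b \<le> a^2 + b^2" by (metis (mono_tags) of_nat_le_iff of_nat_add of_nat_mult of_nat_power of_nat_numeral)
    moreover have "k^2 = a^2 + b^2 + 2*a*b" using ab(1) power2_sum[of a b] by simp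
    ultimately show ?thesis by (simp add: power2_eq_square algebra_simps)
  qed
  also have "\<dots> \<le> 2 * (2 * (\<Sum>m=1..k. seqK \<pi> m))" using ab(2) by simp
  finally show ?thesis by simp
qed


definition Lset :: "nat \<Rightarrow> nat \<Rightarrow> nat \<Rightarrow> (nat \<times> nat \<times> nat) list set" where
  "Lset k i j = {\<pi>. legal_seq k \<pi> \<and> seqI \<pi> k = i \<and> seqJ \<pi> k = j}"

definition W :: "real \<Rightarrow> nat \<Rightarrow> (nat \<times> nat \<times> nat) list \<Rightarrow> real" where
  "W \<beta> k \<pi> = (\<Prod>l=1..k. exp (- \<beta> * real (seqK \<pi> l)))"

lemma W_nonneg: "0 \<le> W \<beta> k \<pi>"
  unfolding W_def by (intro prod_nonneg) auto

lemma Lset_finite: "finite (Lset k i j)"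
proof -
  have "Lset k i j \<subseteq> {xs. set xs \<subseteq> {..i} \<times> {..j} \<times> {..1} \<and> length xs = Suc k}"
  proof
    fix \<pi> assume "\<pi> \<in> Lset k i j"
    then have L: "legal_seq k \<pi>" "seqI \<pi> k = i" "seqJ \<pi> k = j" unfolding Lset_def by auto
    then have len: "length \<pi> = Suc k" unfolding legal_seq_def by simp
    have "x \<in> {..i} \<times> {..j} \<times> {..1}" if "x \<in> set \<pi>" for x
    proof -
      obtain l where l: "l < length \<pi>" "\<pi> ! l = x" using \<open>x \<in> set \<pi>\<close> by (auto simp: in_set_conv_nth)
      then have lk: "l \<le> k" using len by simp
      have m: "seqI \<pi> l \<le> i" "seqJ \<pi> l \<le> j" using legal_mono[OF L(1) lk order.refl] L by auto
      have r: "seqR \<pi> l \<in> {0,1}" using L(1) lk unfolding legal_seq_def by auto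
      have "x = (seqI \<pi> l, seqJ \<pi> l, seqR \<pi> l)" using l(2) unfolding seqI_def seqJ_def seqR_def by auto
      then show ?thesis using m r by auto
    qed
    then show "\<pi> \<in> {xs. set xs \<subseteq> {..i} \<times> {..j} \<times> {..1} \<and> length xs = Suc k}" using len by auto
  qed
  moreover have "finite {xs. set xs \<subseteq> {..i} \<times> {..j} \<times> {..1::nat} \<and> length xs = Suc k}"
    by (intro finite_lists_length_eq) auto
  ultimately show ?thesis by (rule finite_subset)
qed

lemma legal_butlast:
  assumes "legal_seq (Suc k) \<pi>"
  shows "legal_seq k (butlast \<pi>)" "\<And>l. l \<le> k \<Longrightarrow> butlast \<pi> ! l = \<pi> ! l"
    "\<pi> = butlast \<pi> @ [\<pi> ! Suc k]"
proof -
  have len: "length \<pi> = Suc (Suc k)" using assms unfolding legal_seq_def by simp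
  show eq: "\<And>l. l \<le> k \<Longrightarrow> butlast \<pi> ! l = \<pi> ! l" using len by (simp add: nth_butlast)
  have sI: "\<forall>l\<le>k. seqI (butlast \<pi>) l = seqI \<pi> l" using eq by (simp add: seqI_def)
  have sJ: "\<forall>l\<le>k. seqJ (butlast \<pi>) l = seqJ \<pi> l" using eq by (simp add: seqJ_def)
  have sR: "\<forall>l\<le>k. seqR (butlast \<pi>) l = seqR \<pi> l" using eq by (simp add: seqR_def)
  have lb: "length (butlast \<pi>) = Suc k" using len by simp
  show "legal_seq k (butlast \<pi>)"
    using assms sI sJ sR lb unfolding legal_seq_def by auto
  have "\<pi> \<noteq> []" using len by auto
  then show "\<pi> = butlast \<pi> @ [\<pi> ! Suc k]"
    using len by (metis append_butlast_last_id last_conv_nth diff_Suc_1)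
qed

lemma W_append:
  assumes "length q = Suc k"
  shows "W \<beta> (Suc k) (q @ [(i,j,R)]) = W \<beta> k q * exp (- \<beta> * real (if R = 0 then seqI q k else seqJ q k))"
proof -
  have K: "seqK (q @ [(i,j,R)]) l = seqK q l" if "l \<in> {1..k}" for l
    using that assms by (auto simp: seqK_def seqI_def seqJ_def seqR_def nth_append)
  have KS: "seqK (q @ [(i,j,R)]) (Suc k) = (if R = 0 then seqI q k else seqJ q k)"
    using assms by (simp add: seqK_def seqI_def seqJ_def seqR_def nth_append)
  have "{1..Suc k} = insert (Suc k) {1..k}" by auto
  then have "W \<beta> (Suc k) (q @ [(i,j,R)]) = exp (- \<beta> * real (seqK (q @ [(i,j,R)]) (Suc k))) *
       (\<Prod>l=1..k. exp (- \<beta> * real (seqK (q @ [(i,j,R)]) l)))"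
    unfolding W_def by simp
  also have "(\<Prod>l=1..k. exp (- \<beta> * real (seqK (q @ [(i,j,R)]) l))) = W \<beta> k q"
    unfolding W_def by (rule prod.cong) (use K in auto)
  finally show ?thesis using KS by simp
qed

lemma geo:
  assumes "\<beta> > 0"
  shows "(\<Sum>a\<in>{1..n}. exp (- \<beta> * real a)) \<le> 1 / (1 - exp (- \<beta>))"
proof -
  define x where "x = exp (- \<beta>)"
  have x: "0 < x" "x < 1" using assms by (auto simp: x_def)
  have e: "exp (- \<beta> * real a) = x ^ a" for a
    unfolding x_def by (metis exp_of_nat_mult mult.commute)
  have "(\<Sum>a\<in>{1..n}. exp (- \<beta> * real a)) \<le> (\<Sum>a\<in>{..<Suc n}. exp (- \<beta> * real a))"
    by (intro sum_mono2) auto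
  also have "\<dots> = (\<Sum>a<Suc n. x ^ a)" by (intro sum.cong refl) (rule e)
  also have "\<dots> = (1 - x ^ Suc n) / (1 - x)" using x by (subst sum_gp_strict) simp
  also have "\<dots> \<le> 1 / (1 - x)" using x by (intro divide_right_mono) auto
  finally show ?thesis by (simp add: x_def)
qed


lemma Lset_bound:
  assumes "\<beta> > 0"
  shows "(\<Sum>\<pi>\<in>Lset k i j. W \<beta> k \<pi>) \<le> (4 / (1 - exp (- \<beta>))) ^ k"
proof (induction k arbitrary: i j)
  case 0
  have "Lset 0 i j \<subseteq> {[(i,j,0)]}"
  proof
    fix \<pi> assume "\<pi> \<in> Lset 0 i j"
    then have "length \<pi> = 1" "\<pi> ! 0 = (i,j,0)"
      unfolding Lset_def legal_seq_def seqI_def seqJ_def seqR_def by (auto simp: prod_eq_iff)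
    then show "\<pi> \<in> {[(i,j,0)]}" by (cases \<pi>) auto
  qed
  then have "(\<Sum>\<pi>\<in>Lset 0 i j. W \<beta> 0 \<pi>) \<le> (\<Sum>\<pi>\<in>{[(i,j,0)]}. W \<beta> 0 \<pi>)"
    by (intro sum_mono2) (auto simp: W_def)
  then show ?case by (simp add: W_def)
next
  case (Suc k)
  define s where "s = 1 / (1 - exp (- \<beta>))"
  have s0: "s > 0" using assms by (simp add: s_def)
  have s4: "4 / (1 - exp (- \<beta>)) = 4 * s" by (simp add: s_def)
  define A where "A = Lset (Suc k) i j"
  define h where "h \<pi> = (seqI \<pi> k, seqJ \<pi> k, seqR \<pi> (Suc k))" for \<pi> :: "(nat \<times> nat \<times> nat) list"
  define P0 where "P0 = (\<lambda>(a,b). (a,b,0::nat)) ` ({1..i} \<times> {j-1,j})"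
  define P1 where "P1 = (\<lambda>(a,b). (a,b,1::nat)) ` ({i-1,i} \<times> {1..j})"
  define g where "g p = (case p of (a,b,R) \<Rightarrow> exp (- \<beta> * real (if R = 0 then a else b)) * (4*s)^k)"
    for p :: "nat \<times> nat \<times> nat"
  have fA: "finite A" using Lset_finite A_def by simp
  have fP0: "finite P0" by (simp add: P0_def)
  have fP1: "finite P1" by (simp add: P1_def)
  have hA: "h ` A \<subseteq> P0 \<union> P1"
  proof
    fix p assume "p \<in> h ` A"
    then obtain \<pi> where \<pi>: "\<pi> \<in> A" "p = h \<pi>" by auto
    then have L: "legal_seq (Suc k) \<pi>" "seqI \<pi> (Suc k) = i" "seqJ \<pi> (Suc k) = j"
      unfolding A_def Lset_def by auto
    have ge: "1 \<le> seqI \<pi> k" "1 \<le> seqJ \<pi> k" using L(1) unfolding legal_seq_def by auto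
    from legal_stepD[OF L(1) lessI] show "p \<in> P0 \<union> P1"
    proof (elim disjE)
      assume h0: "seqR \<pi> (Suc k) = 0 \<and> seqI \<pi> k + 1 \<le> seqI \<pi> (Suc k) \<and> seqJ \<pi> k \<le> seqJ \<pi> (Suc k) \<and> seqJ \<pi> (Suc k) \<le> seqJ \<pi> k + 1"
      have m: "(seqI \<pi> k, seqJ \<pi> k) \<in> {1..i} \<times> {j-1,j}" using h0 ge L by auto
      have "p = (\<lambda>(a,b). (a,b,0::nat)) (seqI \<pi> k, seqJ \<pi> k)" using \<pi>(2) h0 by (simp add: h_def)
      then have "p \<in> P0" unfolding P0_def using m by blast
      then show ?thesis by simp
    next
      assume h1: "seqR \<pi> (Suc k) = 1 \<and> seqI \<pi> k \<le> seqI \<pi> (Suc k) \<and> seqI \<pi> (Suc k) \<le> seqI \<pi> k + 1 \<and> seqJ \<pi> k + 1 \<le> seqJ \<pi> (Suc k)"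
      have m: "(seqI \<pi> k, seqJ \<pi> k) \<in> {i-1,i} \<times> {1..j}" using h1 ge L by auto
      have "p = (\<lambda>(a,b). (a,b,1::nat)) (seqI \<pi> k, seqJ \<pi> k)" using \<pi>(2) h1 by (simp add: h_def)
      then have "p \<in> P1" unfolding P1_def using m by blast
      then show ?thesis by simp
    qed
  qed
  have inner: "(\<Sum>\<pi>\<in>{\<pi>\<in>A. h \<pi> = p}. W \<beta> (Suc k) \<pi>) \<le> g p" for p
  proof -
    obtain a b R where p: "p = (a,b,R)" by (cases p) auto
    let ?S = "{\<pi>\<in>A. h \<pi> = p}"
    let ?f = "\<lambda>q. q @ [(i,j,R)]"
    let ?e = "exp (- \<beta> * real (if R = 0 then a else b))"
    have sub: "?S \<subseteq> ?f ` Lset k a b"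
    proof
      fix \<pi> assume "\<pi> \<in> ?S"
      then have \<pi>: "legal_seq (Suc k) \<pi>" "seqI \<pi> (Suc k) = i" "seqJ \<pi> (Suc k) = j" "h \<pi> = (a,b,R)"
        unfolding A_def Lset_def p by auto
      have last: "\<pi> ! Suc k = (i,j,R)" using \<pi> unfolding h_def seqI_def seqJ_def seqR_def
        by (auto simp: prod_eq_iff)
      have "seqI (butlast \<pi>) k = a" "seqJ (butlast \<pi>) k = b"
        using legal_butlast(2)[OF \<pi>(1), of k] \<pi>(4) by (auto simp: seqI_def seqJ_def h_def)
      then have "butlast \<pi> \<in> Lset k a b" using legal_butlast(1)[OF \<pi>(1)] by (simp add: Lset_def)
      moreover have "\<pi> = ?f (butlast \<pi>)" using legal_butlast(3)[OF \<pi>(1)] last by simp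
      ultimately show "\<pi> \<in> ?f ` Lset k a b" by blast
    qed
    have inj: "inj_on ?f (Lset k a b)" by (auto simp: inj_on_def)
    have "(\<Sum>\<pi>\<in>?S. W \<beta> (Suc k) \<pi>) \<le> (\<Sum>\<pi>\<in>?f ` Lset k a b. W \<beta> (Suc k) \<pi>)"
      by (rule sum_mono2) (use sub Lset_finite W_nonneg in auto)
    also have "\<dots> = (\<Sum>q\<in>Lset k a b. W \<beta> (Suc k) (?f q))" by (simp add: sum.reindex[OF inj])
    also have "\<dots> = (\<Sum>q\<in>Lset k a b. W \<beta> k q * ?e)"
    proof (rule sum.cong[OF refl])
      fix q assume "q \<in> Lset k a b"
      then have "length q = Suc k" "seqI q k = a" "seqJ q k = b" unfolding Lset_def legal_seq_def by auto
      then show "W \<beta> (Suc k) (?f q) = W \<beta> k q * ?e" using W_append[of q k \<beta> i j R] by simp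
    qed
    also have "\<dots> = (\<Sum>q\<in>Lset k a b. W \<beta> k q) * ?e" by (simp add: sum_distrib_right)
    also have "\<dots> \<le> (4*s)^k * ?e" using Suc.IH[of a b] s4 by (intro mult_right_mono) auto
    finally show ?thesis by (simp add: g_def p mult.commute)
  qed
  have "(\<Sum>\<pi>\<in>A. W \<beta> (Suc k) \<pi>) = (\<Sum>p\<in>P0\<union>P1. \<Sum>\<pi>\<in>{\<pi>\<in>A. h \<pi> = p}. W \<beta> (Suc k) \<pi>)"
    using sum.group[OF fA _ hA, of "W \<beta> (Suc k)"] fP0 fP1 by simp
  also have "\<dots> \<le> (\<Sum>p\<in>P0\<union>P1. g p)" by (intro sum_mono inner)
  also have "\<dots> = (\<Sum>p\<in>P0. g p) + (\<Sum>p\<in>P1. g p)"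
    by (rule sum.union_disjoint) (use fP0 fP1 in \<open>auto simp: P0_def P1_def\<close>)
  also have "(\<Sum>p\<in>P0. g p) \<le> 2 * s * (4*s)^k"
  proof -
    have inj: "inj_on (\<lambda>(a,b). (a,b,0::nat)) ({1..i} \<times> {j-1,j})" by (auto simp: inj_on_def)
    have "(\<Sum>p\<in>P0. g p) = (\<Sum>(a,b)\<in>{1..i} \<times> {j-1,j}. exp (- \<beta> * real a) * (4*s)^k)"
      unfolding P0_def by (subst sum.reindex[OF inj]) (auto simp: g_def intro!: sum.cong)
    also have "\<dots> = (\<Sum>a\<in>{1..i}. \<Sum>b\<in>{j-1,j}. exp (- \<beta> * real a) * (4*s)^k)"
      by (rule sum.cartesian_product[symmetric])
    also have "\<dots> = (\<Sum>a\<in>{1..i}. real (card {j-1,j}) * (exp (- \<beta> * real a) * (4*s)^k))" by simp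
    also have "\<dots> \<le> (\<Sum>a\<in>{1..i}. 2 * (exp (- \<beta> * real a) * (4*s)^k))"
    proof (intro sum_mono mult_right_mono)
      show "real (card {j-1,j}) \<le> 2" by (simp add: card_insert_if)
    qed (use s0 in auto)
    also have "\<dots> = 2 * (4*s)^k * (\<Sum>a\<in>{1..i}. exp (- \<beta> * real a))"
      by (simp add: sum_distrib_left sum_distrib_right mult_ac)
    also have "\<dots> \<le> 2 * (4*s)^k * s" using geo[OF assms, of i] s0 unfolding s_def
      by (intro mult_left_mono) auto
    finally show ?thesis by (simp add: mult_ac)
  qed
  also have "(\<Sum>p\<in>P1. g p) \<le> 2 * s * (4*s)^k"
  proof -
    have inj: "inj_on (\<lambda>(a,b). (a,b,1::nat)) ({i-1,i} \<times> {1..j})" by (auto simp: inj_on_def)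
    have "(\<Sum>p\<in>P1. g p) = (\<Sum>(a,b)\<in>{i-1,i} \<times> {1..j}. exp (- \<beta> * real b) * (4*s)^k)"
      unfolding P1_def by (subst sum.reindex[OF inj]) (auto simp: g_def intro!: sum.cong)
    also have "\<dots> = (\<Sum>a\<in>{i-1,i}. \<Sum>b\<in>{1..j}. exp (- \<beta> * real b) * (4*s)^k)"
      by (rule sum.cartesian_product[symmetric])
    also have "\<dots> = real (card {i-1,i}) * (\<Sum>b\<in>{1..j}. exp (- \<beta> * real b) * (4*s)^k)" by simp
    also have "\<dots> \<le> 2 * (\<Sum>b\<in>{1..j}. exp (- \<beta> * real b) * (4*s)^k)"
    proof (intro mult_right_mono)
      show "real (card {i-1,i}) \<le> 2" by (simp add: card_insert_if)
    qed (use s0 in \<open>auto intro: sum_nonneg\<close>)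
    also have "\<dots> = 2 * (4*s)^k * (\<Sum>b\<in>{1..j}. exp (- \<beta> * real b))"
      by (simp add: sum_distrib_left sum_distrib_right mult_ac)
    also have "\<dots> \<le> 2 * (4*s)^k * s" using geo[OF assms, of j] s0 unfolding s_def
      by (intro mult_left_mono) auto
    finally show ?thesis by (simp add: mult_ac)
  qed
  finally show ?case unfolding A_def s4 by (simp add: algebra_simps)
qed


theorem lemma4p17:
  fixes \<alpha> :: real
  assumes "\<alpha> > 0"
  shows "\<exists>c u :: real. u > 0 \<and>
    (\<forall>i j k :: nat. 1 \<le> i \<longrightarrow> 1 \<le> j \<longrightarrow> 1 \<le> k \<longrightarrow>
      (\<Sum>\<pi>\<in>seq0 k i j. \<Prod>l = 1..k. exp (- \<alpha> * real (seqK \<pi> l)))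
        \<le> c * exp (- u * real k ^ 2))"
proof -
  define \<beta> where "\<beta> = \<alpha> / 2"
  have b0: "\<beta> > 0" using assms by (simp add: \<beta>_def)
  define C where "C = 4 / (1 - exp (- \<beta>))"
  have C0: "C > 0" using b0 by (simp add: C_def)
  define L where "L = ln C"
  define c where "c = exp (4 * L^2 / \<alpha>)"
  have main: "(\<Sum>\<pi>\<in>seq0 k i j. \<Prod>l = 1..k. exp (- \<alpha> * real (seqK \<pi> l)))
        \<le> c * exp (- (\<alpha>/16) * real k ^ 2)" for i j k
  proof -
    have pw: "(\<Prod>l = 1..k. exp (- \<alpha> * real (seqK \<pi> l))) \<le> exp (- \<beta> * real k ^ 2 / 4) * W \<beta> k \<pi>"
      if "legal_seq k \<pi>" for \<pi>
    proof -
      define S where "S = (\<Sum>l=1..k. real (seqK \<pi> l))"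
      have kS: "real k ^ 2 \<le> 4 * S"
      proof -
        have "real (k^2) \<le> real (4 * (\<Sum>l=1..k. seqK \<pi> l))" using Ksum_bound[OF that] by linarith
        then show ?thesis by (simp add: S_def)
      qed
      have e1: "(\<Prod>l = 1..k. exp (- \<alpha> * real (seqK \<pi> l))) = exp (- \<alpha> * S)"
        by (simp add: S_def exp_sum sum_distrib_left)
      have e2: "W \<beta> k \<pi> = exp (- \<beta> * S)"
        by (simp add: W_def S_def exp_sum sum_distrib_left)
      have "exp (- \<alpha> * S) = exp (- \<beta> * S) * exp (- \<beta> * S)"
        by (simp add: \<beta>_def flip: exp_add)
      also have "\<dots> \<le> exp (- \<beta> * real k ^ 2 / 4) * exp (- \<beta> * S)"
        using kS b0 by (intro mult_right_mono) auto
      finally show ?thesis using e1 e2 by simp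
    qed
    have sub: "seq0 k i j \<subseteq> Lset k i j"
      unfolding seq0_def Lset_def by (auto simp: seqI_def seqJ_def)
    have "(\<Sum>\<pi>\<in>seq0 k i j. \<Prod>l = 1..k. exp (- \<alpha> * real (seqK \<pi> l)))
        \<le> (\<Sum>\<pi>\<in>seq0 k i j. exp (- \<beta> * real k ^ 2 / 4) * W \<beta> k \<pi>)"
      by (intro sum_mono pw) (simp add: seq0_def)
    also have "\<dots> \<le> (\<Sum>\<pi>\<in>Lset k i j. exp (- \<beta> * real k ^ 2 / 4) * W \<beta> k \<pi>)"
      by (intro sum_mono2 Lset_finite sub) (simp add: W_nonneg)
    also have "\<dots> = exp (- \<beta> * real k ^ 2 / 4) * (\<Sum>\<pi>\<in>Lset k i j. W \<beta> k \<pi>)"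
      by (simp add: sum_distrib_left)
    also have "\<dots> \<le> exp (- \<beta> * real k ^ 2 / 4) * C ^ k"
      using Lset_bound[OF b0] unfolding C_def by (intro mult_left_mono) auto
    also have "C ^ k = exp (real k * L)"
      using C0 by (simp add: L_def exp_of_nat_mult)
    also have "exp (- \<beta> * real k ^ 2 / 4) * exp (real k * L) = exp (real k * L - \<alpha> * real k ^ 2 / 8)"
      by (simp add: \<beta>_def flip: exp_add)
    also have "\<dots> \<le> exp (4 * L^2 / \<alpha> - (\<alpha>/16) * real k ^ 2)"
    proof -
      have "0 \<le> \<alpha>/16 * (real k - 8*L/\<alpha>)^2" using assms by simp
      also have "\<alpha>/16 * (real k - 8*L/\<alpha>)^2 = \<alpha> * real k ^ 2 / 16 - real k * L + 4 * L^2 / \<alpha>"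
        using assms by (simp add: field_simps power2_eq_square)
      finally show ?thesis by simp
    qed
    also have "\<dots> = c * exp (- (\<alpha>/16) * real k ^ 2)"
      by (simp add: c_def flip: exp_add)
    finally show ?thesis .
  qed
  show ?thesis
    by (rule exI[of _ c], rule exI[of _ "\<alpha>/16"]) (use assms main in auto)
qed

end
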